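(* Let $G$ be a finite group and $U$ a projective unitary representation of $G$ on a finite dimensional complex Hilbert space $\mathcal{H}$. Suppose there exist two linearly independent vectors $v_1,v_2\in\mathcal{H}$ and functions $f_1,f_2:G\to\mathbb{T}$ such that $U(g)v_i=f_i(g)v_i$ for all $g\in G$ and $i\in\{1,2\}$. Then there exists no $U$-covariant pure-state informationally complete observable (based on $G/H$ for any proper subgroup $H$ of $G$).
   Context: $\mathbb{T}$ is the group of unimodular complex numbers. A projective unitary representation of $G$ on $\mathcal{H}$ is a map $g\mapsto U(g)$ into the unitaries with $U(e)=I$ and $U(gh)=\omega(g,h)U(g)U(h)$, $\omega(g,h)\in\mathbb{T}$. An observable with finite outcome set $\Omega$ is a map $\mathsf{M}$ from $\Omega$ to positive operators on $\mathcal{H}$ with $\sum_{x\in\Omega}\mathsf{M}(x)=I$. It is pure-state informationally complete (PIC) if for any two different pure states (rank-one projections) $\varrho_1\neq\varrho_2$ there is $x\in\Omega$ with $\mathrm{tr}(\varrho_1\mathsf{M}(x))\neq\mathrm{tr}(\varrho_2\mathsf{M}(x))$. For a subgroup $H$ of $G$, $G$ acts on the set of left cosets $G/H$ by $g'\cdot gH=g'gH$; an observable $\mathsf{M}$ on $\Omega=G/H$ is $U$-covariant if $U(g)\mathsf{M}(x)U(g)^*=\mathsf{M}(g\cdot x)$ for all $g\in G$, $x\in G/H$. *)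

theory Defs
  imports "HOL-Algebra.Left_Coset" "Jordan_Normal_Form.Schur_Decomposition"
begin

(* The finite-dimensional complex Hilbert space H is C^n (column vectors of
   dimension n, inner product <v,w> = w \<bullet>c v, i.e. conjugate-linear in
   the first slot); operators on H are n x n complex matrices. *)

definition mat_trace :: "complex mat \<Rightarrow> complex" where
  "mat_trace A = (\<Sum>i<dim_row A. A $$ (i, i))"

definition unitary_mat :: "nat \<Rightarrow> complex mat \<Rightarrow> bool" where
  "unitary_mat n A \<longleftrightarrow> A \<in> carrier_mat n n \<and>
     A * mat_adjoint A = 1\<^sub>m n \<and> mat_adjoint A * A = 1\<^sub>m n"

definition positive_op :: "nat \<Rightarrow> complex mat \<Rightarrow> bool" where
  "positive_op n A \<longleftrightarrow> A \<in> carrier_mat n n \<and>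
     (\<forall>v \<in> carrier_vec n. (A *\<^sub>v v) \<bullet>c v \<in> \<real> \<and> 0 \<le> Re ((A *\<^sub>v v) \<bullet>c v))"

definition ket_bra :: "nat \<Rightarrow> complex vec \<Rightarrow> complex mat" where
  "ket_bra n v = mat n n (\<lambda>(i, j). v $ i * cnj (v $ j))"

definition pure_state :: "nat \<Rightarrow> complex mat \<Rightarrow> bool" where
  "pure_state n \<rho> \<longleftrightarrow> (\<exists>v \<in> carrier_vec n. v \<bullet>c v = 1 \<and> \<rho> = ket_bra n v)"

definition mat_sum :: "nat \<Rightarrow> ('b \<Rightarrow> complex mat) \<Rightarrow> 'b set \<Rightarrow> complex mat" where
  "mat_sum n M \<Omega> = mat n n (\<lambda>(i, j). \<Sum>x\<in>\<Omega>. M x $$ (i, j))"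

definition proj_unitary_rep :: "('a, 'c) monoid_scheme \<Rightarrow> nat \<Rightarrow> ('a \<Rightarrow> complex mat) \<Rightarrow> bool" where
  "proj_unitary_rep G n U \<longleftrightarrow>
     (\<forall>g \<in> carrier G. unitary_mat n (U g)) \<and>
     U \<one>\<^bsub>G\<^esub> = 1\<^sub>m n \<and>
     (\<forall>g \<in> carrier G. \<forall>h \<in> carrier G. \<exists>\<omega>::complex. cmod \<omega> = 1 \<and>
        U (g \<otimes>\<^bsub>G\<^esub> h) = \<omega> \<cdot>\<^sub>m (U g * U h))"

definition observable :: "nat \<Rightarrow> 'b set \<Rightarrow> ('b \<Rightarrow> complex mat) \<Rightarrow> bool" where
  "observable n \<Omega> M \<longleftrightarrow> finite \<Omega> \<and> (\<forall>x \<in> \<Omega>. positive_op n (M x)) \<and>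
     mat_sum n M \<Omega> = 1\<^sub>m n"

definition PIC :: "nat \<Rightarrow> 'b set \<Rightarrow> ('b \<Rightarrow> complex mat) \<Rightarrow> bool" where
  "PIC n \<Omega> M \<longleftrightarrow> (\<forall>\<rho>1 \<rho>2. pure_state n \<rho>1 \<longrightarrow> pure_state n \<rho>2 \<longrightarrow> \<rho>1 \<noteq> \<rho>2 \<longrightarrow>
     (\<exists>x \<in> \<Omega>. mat_trace (\<rho>1 * M x) \<noteq> mat_trace (\<rho>2 * M x)))"

(* U-covariance on \<Omega> = G/H (left cosets), action g \<cdot> aH = (g a)H = g <# (aH) *)
definition covariant :: "('a, 'c) monoid_scheme \<Rightarrow> 'a set \<Rightarrow> ('a \<Rightarrow> complex mat) \<Rightarrow>
    ('a set \<Rightarrow> complex mat) \<Rightarrow> bool" where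
  "covariant G H U M \<longleftrightarrow>
     (\<forall>g \<in> carrier G. \<forall>x \<in> lcosets\<^bsub>G\<^esub> H. U g * M x * mat_adjoint (U g) = M (g <#\<^bsub>G\<^esub> x))"

definition lin_indep2 :: "complex vec \<Rightarrow> complex vec \<Rightarrow> bool" where
  "lin_indep2 v1 v2 \<longleftrightarrow> (\<forall>a b::complex. a \<cdot>\<^sub>v v1 + b \<cdot>\<^sub>v v2 = 0\<^sub>v (dim_vec v1) \<longrightarrow> a = 0 \<and> b = 0)"

end

theory Submission
  imports Defs
begin

lemma trace_ket:
  assumes A: "A \<in> carrier_mat n n" and u: "u \<in> carrier_vec n"
  shows "mat_trace (ket_bra n u * A) = (A *\<^sub>v u) \<bullet>c u"
proof -
  have "mat_trace (ket_bra n u * A) = (\<Sum>i<n. \<Sum>k<n. u $ i * cnj (u $ k) * A $$ (k, i))"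
    using A u by (auto simp: mat_trace_def ket_bra_def scalar_prod_def row_def col_def lessThan_atLeast0 intro!: sum.cong)
  also have "\<dots> = (\<Sum>k<n. \<Sum>i<n. u $ i * cnj (u $ k) * A $$ (k, i))" by (rule sum.swap)
  also have "\<dots> = (A *\<^sub>v u) \<bullet>c u"
    using A u by (auto simp: scalar_prod_def mult_mat_vec_def row_def lessThan_atLeast0 sum_distrib_right intro!: sum.cong)
  finally show ?thesis .
qed

lemma adj_lemma:
  fixes A :: "complex mat"
  assumes A: "A \<in> carrier_mat n n" and x: "x \<in> carrier_vec n" and y: "y \<in> carrier_vec n"
  shows "(A *\<^sub>v x) \<bullet>c y = x \<bullet>c (mat_adjoint A *\<^sub>v y)"
proof -
  have "(A *\<^sub>v x) \<bullet>c y = (\<Sum>k<n. \<Sum>i<n. A $$ (k, i) * x $ i * cnj (y $ k))"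
    using A x y by (auto simp: scalar_prod_def mult_mat_vec_def row_def lessThan_atLeast0 sum_distrib_right intro!: sum.cong)
  also have "\<dots> = (\<Sum>i<n. \<Sum>k<n. A $$ (k, i) * x $ i * cnj (y $ k))" by (rule sum.swap)
  also have "\<dots> = x \<bullet>c (mat_adjoint A *\<^sub>v y)"
    using A x y by (auto simp: scalar_prod_def mult_mat_vec_def row_def lessThan_atLeast0 sum_distrib_left
       mat_adjoint_def mat_of_rows_def cols_def col_def intro!: sum.cong)
  finally show ?thesis .
qed

lemma mat_sum_insert:
  assumes "finite F" "x \<notin> F" "M x \<in> carrier_mat n n"
  shows "mat_sum n M (insert x F) = M x + mat_sum n M F"
  using assms by (auto simp: mat_sum_def intro!: eq_matI)

lemma mat_sum_carrier: "mat_sum n M F \<in> carrier_mat n n" by (simp add: mat_sum_def)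

lemma mat_sum_form:
  fixes M :: "'b \<Rightarrow> complex mat"
  assumes "finite F" "\<forall>x\<in>F. M x \<in> carrier_mat n n" and u: "u \<in> carrier_vec n"
  shows "(mat_sum n M F *\<^sub>v u) \<bullet>c u = (\<Sum>x\<in>F. (M x *\<^sub>v u) \<bullet>c u)"
  using assms
proof (induction F rule: finite_induct)
  case empty
  have "mat_sum n M {} = 0\<^sub>m n n" by (auto simp: mat_sum_def intro!: eq_matI)
  then show ?case using u by (simp add: scalar_prod_def)
next
  case (insert x F)
  have "(mat_sum n M (insert x F) *\<^sub>v u) \<bullet>c u = ((M x *\<^sub>v u) + (mat_sum n M F *\<^sub>v u)) \<bullet>c u"
    using insert u by (simp add: mat_sum_insert add_mult_distrib_mat_vec[OF _ mat_sum_carrier])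
  also have "\<dots> = (M x *\<^sub>v u) \<bullet>c u + (mat_sum n M F *\<^sub>v u) \<bullet>c u"
    using insert u by (intro add_scalar_prod_distrib) (auto intro: mult_mat_vec_carrier[OF _ u] simp: mat_sum_carrier)
  finally show ?case using insert by simp
qed


lemma smult_cprod:
  fixes v w :: "complex vec"
  assumes "v \<in> carrier_vec n" "w \<in> carrier_vec n"
  shows "(c \<cdot>\<^sub>v v) \<bullet>c (d \<cdot>\<^sub>v w) = c * cnj d * (v \<bullet>c w)"
  using assms by (simp add: scalar_prod_def sum_distrib_left algebra_simps)

lemma cnj_unit: "cmod f = 1 \<Longrightarrow> f * cnj f = 1"
  by (metis complex_norm_square of_real_1 power_one)

lemma adj_eig:
  fixes A :: "complex mat"
  assumes A: "unitary_mat n A" and u: "u \<in> carrier_vec n" and f: "cmod f = 1"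
    and e: "A *\<^sub>v u = f \<cdot>\<^sub>v u"
  shows "mat_adjoint A *\<^sub>v u = cnj f \<cdot>\<^sub>v u"
proof -
  have Ac: "A \<in> carrier_mat n n" and AA: "mat_adjoint A * A = 1\<^sub>m n" using A by (auto simp: unitary_mat_def)
  have adc: "mat_adjoint A \<in> carrier_mat n n" using Ac by (auto simp: mat_adjoint_def)
  have "u = (mat_adjoint A * A) *\<^sub>v u" using AA u by simp
  also have "\<dots> = mat_adjoint A *\<^sub>v (f \<cdot>\<^sub>v u)" using assoc_mult_mat_vec[OF adc Ac u] e by simp
  also have "\<dots> = f \<cdot>\<^sub>v (mat_adjoint A *\<^sub>v u)" using adc u by (simp add: mult_mat_vec)
  finally have "u = f \<cdot>\<^sub>v (mat_adjoint A *\<^sub>v u)" .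
  hence "cnj f \<cdot>\<^sub>v u = (cnj f * f) \<cdot>\<^sub>v (mat_adjoint A *\<^sub>v u)" by (metis smult_smult_assoc)
  also have "cnj f * f = 1" using cnj_unit[OF f] by (simp add: mult.commute)
  finally show ?thesis by simp
qed

lemma conj_form:
  fixes A M0 :: "complex mat"
  assumes A: "unitary_mat n A" and M0: "M0 \<in> carrier_mat n n" and u: "u \<in> carrier_vec n" and f: "cmod f = 1"
    and e: "A *\<^sub>v u = f \<cdot>\<^sub>v u"
  shows "((A * M0 * mat_adjoint A) *\<^sub>v u) \<bullet>c u = (M0 *\<^sub>v u) \<bullet>c u"
proof -
  have Ac: "A \<in> carrier_mat n n" using A by (auto simp: unitary_mat_def)
  have adc: "mat_adjoint A \<in> carrier_mat n n" using Ac by (auto simp: mat_adjoint_def)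
  have w: "mat_adjoint A *\<^sub>v u = cnj f \<cdot>\<^sub>v u" by (rule adj_eig[OF A u f e])
  have "(A * M0 * mat_adjoint A) *\<^sub>v u = A *\<^sub>v (M0 *\<^sub>v (mat_adjoint A *\<^sub>v u))"
    using Ac M0 adc u by (metis assoc_mult_mat_vec mult_carrier_mat mult_mat_vec_carrier)
  also have "\<dots> = A *\<^sub>v (cnj f \<cdot>\<^sub>v (M0 *\<^sub>v u))" using w M0 u by (simp add: mult_mat_vec)
  finally have "((A * M0 * mat_adjoint A) *\<^sub>v u) \<bullet>c u = (cnj f \<cdot>\<^sub>v (M0 *\<^sub>v u)) \<bullet>c (mat_adjoint A *\<^sub>v u)"
    using adj_lemma[OF Ac _ u, of "cnj f \<cdot>\<^sub>v (M0 *\<^sub>v u)"] M0 u by simp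
  also have "\<dots> = cnj f * cnj (cnj f) * ((M0 *\<^sub>v u) \<bullet>c u)" unfolding w
    by (rule smult_cprod) (use M0 u in auto)
  also have "cnj f * cnj (cnj f) = 1" using cnj_unit[OF f] by (simp add: mult.commute)
  finally show ?thesis by simp
qed

lemma ket_apply:
  assumes u: "u \<in> carrier_vec n" and w: "w \<in> carrier_vec n"
  shows "ket_bra n u *\<^sub>v w = (w \<bullet>c u) \<cdot>\<^sub>v u"
  using assms by (auto simp: ket_bra_def mult_mat_vec_def scalar_prod_def row_def sum_distrib_left algebra_simps intro!: eq_vecI sum.cong)

lemma normalize_ex:
  fixes v :: "complex vec"
  assumes v: "v \<in> carrier_vec n" and nz: "v \<noteq> 0\<^sub>v n"
  shows "\<exists>c. c \<noteq> 0 \<and> (c \<cdot>\<^sub>v v) \<bullet>c (c \<cdot>\<^sub>v v) = 1"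
proof -
  define r where "r = (\<Sum>i<n. (cmod (v $ i))\<^sup>2)"
  have s: "v \<bullet>c v = of_real r"
  proof -
    have "v \<bullet>c v = (\<Sum>i<n. v $ i * cnj (v $ i))" using v by (simp add: scalar_prod_def lessThan_atLeast0)
    also have "\<dots> = (\<Sum>i<n. of_real ((cmod (v $ i))\<^sup>2))" by (simp only: complex_norm_square)
    also have "\<dots> = of_real r" unfolding r_def by (simp only: of_real_sum)
    finally show ?thesis .
  qed
  have "v \<bullet>c v \<noteq> 0" using conjugate_square_eq_0_vec[OF v] nz by auto
  hence r0: "r \<noteq> 0" using s by auto
  have "r \<ge> 0" unfolding r_def by (intro sum_nonneg) auto
  hence rp: "r > 0" using r0 by auto
  define c where "c = complex_of_real (1 / sqrt r)"
  have "(c \<cdot>\<^sub>v v) \<bullet>c (c \<cdot>\<^sub>v v) = c * cnj c * of_real r" using smult_cprod[OF v v] s by simp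
  also have "\<dots> = 1" using rp unfolding c_def
    by (simp flip: of_real_mult)
  finally have "(c \<cdot>\<^sub>v v) \<bullet>c (c \<cdot>\<^sub>v v) = 1" .
  moreover have "c \<noteq> 0" using rp unfolding c_def by simp
  ultimately show ?thesis by blast
qed


theorem proposition4:
  fixes G :: "('a, 'c) monoid_scheme" and n :: nat and U :: "'a \<Rightarrow> complex mat"
    and v1 v2 :: "complex vec" and f1 f2 :: "'a \<Rightarrow> complex"
  assumes "group G" and "finite (carrier G)"
    and "proj_unitary_rep G n U"
    and "v1 \<in> carrier_vec n" and "v2 \<in> carrier_vec n" and "lin_indep2 v1 v2"
    and "\<forall>g \<in> carrier G. cmod (f1 g) = 1 \<and> cmod (f2 g) = 1"
    and "\<forall>g \<in> carrier G. U g *\<^sub>v v1 = f1 g \<cdot>\<^sub>v v1 \<and> U g *\<^sub>v v2 = f2 g \<cdot>\<^sub>v v2"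
  shows "\<not> (\<exists>H M. subgroup H G \<and> H \<noteq> carrier G \<and>
            observable n (lcosets\<^bsub>G\<^esub> H) M \<and> covariant G H U M \<and>
            PIC n (lcosets\<^bsub>G\<^esub> H) M)"
proof
  assume "\<exists>H M. subgroup H G \<and> H \<noteq> carrier G \<and>
            observable n (lcosets\<^bsub>G\<^esub> H) M \<and> covariant G H U M \<and>
            PIC n (lcosets\<^bsub>G\<^esub> H) M"
  then obtain H M where sub: "subgroup H G" and obs: "observable n (lcosets\<^bsub>G\<^esub> H) M"
    and cov: "covariant G H U M" and pic: "PIC n (lcosets\<^bsub>G\<^esub> H) M" by blast
  define \<Omega> where "\<Omega> = lcosets\<^bsub>G\<^esub> H"
  have fin: "finite \<Omega>" and Mc: "\<forall>x\<in>\<Omega>. M x \<in> carrier_mat n n" and Msum: "mat_sum n M \<Omega> = 1\<^sub>m n"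
    using obs by (auto simp: observable_def positive_op_def \<Omega>_def)
  have HO: "H \<in> \<Omega>"
  proof -
    have "\<one>\<^bsub>G\<^esub> <#\<^bsub>G\<^esub> H = H" using group.lcos_mult_one[OF assms(1)] sub subgroup.subset by blast
    thus ?thesis unfolding \<Omega>_def LCOSETS_def using monoid.one_closed[OF group.is_monoid[OF assms(1)]] by force
  qed
  have unit: "\<forall>g\<in>carrier G. unitary_mat n (U g)" using assms(3) by (simp add: proj_unitary_rep_def)
  define q where "q u = (M H *\<^sub>v u) \<bullet>c u" for u
  have key: "(M x *\<^sub>v u) \<bullet>c u = q u"
    if x: "x \<in> \<Omega>" and u: "u \<in> carrier_vec n" and f: "\<forall>g\<in>carrier G. cmod (f g) = 1"
      and e: "\<forall>g\<in>carrier G. U g *\<^sub>v u = f g \<cdot>\<^sub>v u" for x u f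
  proof -
    obtain a where a: "a \<in> carrier G" and xa: "x = a <#\<^bsub>G\<^esub> H" using x unfolding \<Omega>_def LCOSETS_def by blast
    have "U a * M H * mat_adjoint (U a) = M x" using cov a HO xa unfolding covariant_def \<Omega>_def by blast
    moreover have "((U a * M H * mat_adjoint (U a)) *\<^sub>v u) \<bullet>c u = q u"
      unfolding q_def using conj_form[OF _ _ u] unit a f e Mc HO by blast
    ultimately show ?thesis by simp
  qed
  have qval: "of_nat (card \<Omega>) * q u = 1"
    if u: "u \<in> carrier_vec n" and un: "u \<bullet>c u = 1" and f: "\<forall>g\<in>carrier G. cmod (f g) = 1"
      and e: "\<forall>g\<in>carrier G. U g *\<^sub>v u = f g \<cdot>\<^sub>v u" for u f
  proof -
    have "1 = (mat_sum n M \<Omega> *\<^sub>v u) \<bullet>c u" using Msum u un by simp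
    also have "\<dots> = (\<Sum>x\<in>\<Omega>. (M x *\<^sub>v u) \<bullet>c u)" by (rule mat_sum_form[OF fin Mc u])
    also have "\<dots> = (\<Sum>x\<in>\<Omega>. q u)" using key[OF _ u f e] by simp
    finally show ?thesis by simp
  qed
  have d1: "dim_vec v1 = n" using assms(4) by simp
  have nz1: "v1 \<noteq> 0\<^sub>v n"
  proof
    assume z: "v1 = 0\<^sub>v n"
    have "1 \<cdot>\<^sub>v v1 + 0 \<cdot>\<^sub>v v2 = 0\<^sub>v (dim_vec v1)" using z assms(5) d1 by auto
    thus False using assms(6) unfolding lin_indep2_def by (metis zero_neq_one)
  qed
  have nz2: "v2 \<noteq> 0\<^sub>v n"
  proof
    assume z: "v2 = 0\<^sub>v n"
    have "0 \<cdot>\<^sub>v v1 + 1 \<cdot>\<^sub>v v2 = 0\<^sub>v (dim_vec v1)" using z assms(4) d1 by auto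
    thus False using assms(6) unfolding lin_indep2_def by (metis zero_neq_one)
  qed
  obtain c1 where c1: "c1 \<noteq> 0" "(c1 \<cdot>\<^sub>v v1) \<bullet>c (c1 \<cdot>\<^sub>v v1) = 1" using normalize_ex[OF assms(4) nz1] by blast
  obtain c2 where c2: "c2 \<noteq> 0" "(c2 \<cdot>\<^sub>v v2) \<bullet>c (c2 \<cdot>\<^sub>v v2) = 1" using normalize_ex[OF assms(5) nz2] by blast
  define u1 where "u1 = c1 \<cdot>\<^sub>v v1"
  define u2 where "u2 = c2 \<cdot>\<^sub>v v2"
  have u1c: "u1 \<in> carrier_vec n" and u2c: "u2 \<in> carrier_vec n" using assms(4,5) by (auto simp: u1_def u2_def)
  have e1: "\<forall>g\<in>carrier G. U g *\<^sub>v u1 = f1 g \<cdot>\<^sub>v u1"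
  proof
    fix g assume g: "g \<in> carrier G"
    have "U g \<in> carrier_mat n n" using unit g by (simp add: unitary_mat_def)
    thus "U g *\<^sub>v u1 = f1 g \<cdot>\<^sub>v u1" using assms(4,8) g unfolding u1_def
      by (simp add: mult_mat_vec smult_smult_assoc mult.commute)
  qed
  have e2: "\<forall>g\<in>carrier G. U g *\<^sub>v u2 = f2 g \<cdot>\<^sub>v u2"
  proof
    fix g assume g: "g \<in> carrier G"
    have "U g \<in> carrier_mat n n" using unit g by (simp add: unitary_mat_def)
    thus "U g *\<^sub>v u2 = f2 g \<cdot>\<^sub>v u2" using assms(5,8) g unfolding u2_def
      by (simp add: mult_mat_vec smult_smult_assoc mult.commute)
  qed
  have fa1: "\<forall>g\<in>carrier G. cmod (f1 g) = 1" and fa2: "\<forall>g\<in>carrier G. cmod (f2 g) = 1" using assms(7) by auto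
  have q1: "of_nat (card \<Omega>) * q u1 = 1" by (rule qval[OF u1c _ fa1 e1]) (use c1 u1_def in simp)
  have q2: "of_nat (card \<Omega>) * q u2 = 1" by (rule qval[OF u2c _ fa2 e2]) (use c2 u2_def in simp)
  have qeq: "q u1 = q u2" using q1 q2
    by (metis mult_cancel_left mult_zero_left zero_neq_one)
  have p1: "pure_state n (ket_bra n u1)" using u1c c1 u1_def pure_state_def by blast
  have p2: "pure_state n (ket_bra n u2)" using u2c c2 u2_def pure_state_def by blast
  have neq: "ket_bra n u1 \<noteq> ket_bra n u2"
  proof
    assume eq: "ket_bra n u1 = ket_bra n u2"
    have "u1 = (u1 \<bullet>c u1) \<cdot>\<^sub>v u1" using c1 u1_def by simp
    also have "\<dots> = ket_bra n u1 *\<^sub>v u1" using ket_apply[OF u1c u1c] by simp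
    also have "\<dots> = (u1 \<bullet>c u2) \<cdot>\<^sub>v u2" using eq ket_apply[OF u2c u1c] by simp
    finally have "c1 \<cdot>\<^sub>v v1 = ((u1 \<bullet>c u2) * c2) \<cdot>\<^sub>v v2" unfolding u1_def u2_def by (simp add: smult_smult_assoc)
    hence hv: "c1 \<cdot>\<^sub>v v1 = ((u1 \<bullet>c u2) * c2) \<cdot>\<^sub>v v2" .
    have "c1 \<cdot>\<^sub>v v1 + (- ((u1 \<bullet>c u2) * c2)) \<cdot>\<^sub>v v2 = 0\<^sub>v (dim_vec v1)"
    proof (rule eq_vecI)
      fix i assume i: "i < dim_vec (0\<^sub>v (dim_vec v1) :: complex vec)"
      have "(c1 \<cdot>\<^sub>v v1) $ i = (((u1 \<bullet>c u2) * c2) \<cdot>\<^sub>v v2) $ i" using hv by simp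
      thus "(c1 \<cdot>\<^sub>v v1 + (- ((u1 \<bullet>c u2) * c2)) \<cdot>\<^sub>v v2) $ i = 0\<^sub>v (dim_vec v1) $ i"
        using i assms(4,5) d1 by simp
    qed (use assms(4,5) d1 in simp)
    thus False using assms(6) c1 unfolding lin_indep2_def by blast
  qed
  obtain x where x: "x \<in> \<Omega>" and ne: "mat_trace (ket_bra n u1 * M x) \<noteq> mat_trace (ket_bra n u2 * M x)"
    using pic p1 p2 neq unfolding PIC_def \<Omega>_def by blast
  have "mat_trace (ket_bra n u1 * M x) = q u1" using trace_ket[OF _ u1c] key[OF x u1c fa1 e1] Mc x by simp
  moreover have "mat_trace (ket_bra n u2 * M x) = q u2" using trace_ket[OF _ u2c] key[OF x u2c fa2 e2] Mc x by simp
  ultimately show False using ne qeq by simp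
qed

end
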